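(* In the $\ell^2$ linear social choice setting, on every instance with $n$ voters the uniform projection rule $f_{\mathrm{UProj2}}$ satisfies $\mathbb{E}_{c\sim f_{\mathrm{UProj2}}}[\mathrm{UW}(c)]\ge\frac nd$. Consequently $\mathrm{D}(f_{\mathrm{UProj2}})=O(d)$.
   Context: Setting ($\ell^2$ linear social choice). Fix a dimension $d$. An instance consists of $n$ voters and $m$ candidates, each a vector in $\mathbb{R}^d_{\ge 0}$ with Euclidean norm $1$ (superscripts denote coordinates), with every voter vector in $\mathrm{Cone}(C)$ (nonnegative linear combinations of the candidate vectors $C$). Utility $u_v(c)=v^\top c$; voters report consistent rankings; $\mathrm{UW}(c)=\sum_v u_v(c)$. A randomized rule may use the profile and candidate vectors but not the voter vectors. Distortion on an instance: $\max_c\mathrm{UW}(c)/\mathbb{E}_{c\sim f}[\mathrm{UW}(c)]$; $\mathrm{D}(f)$ is the supremum over instances, as a function of $d$. Uniform projection rule $f_{\mathrm{UProj2}}$: with $\mu_2=(1/\sqrt d,\dots,1/\sqrt d)$, output a distribution $(p_c)_{c\in C}$ such that $\hat c=\sum_c p_c c$ minimizes $\mathrm{KL}(\mu_2\|x)=\sum_{i=1}^d\mu_2^i\ln(\mu_2^i/x^i)$ over $x\in\mathrm{CH}(C)$, the convex hull of $C$. *)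

theory Defs
  imports "HOL-Analysis.Analysis"
begin

definition unit_nonneg :: "real ^ 'd \<Rightarrow> bool" where
  "unit_nonneg x \<longleftrightarrow> (\<forall>i. 0 \<le> x $ i) \<and> norm x = 1"

definition lin_cone :: "(real ^ 'd) set \<Rightarrow> (real ^ 'd) set" where
  "lin_cone C = {x. \<exists>a. (\<forall>c\<in>C. 0 \<le> a c) \<and> x = (\<Sum>c\<in>C. a c *\<^sub>R c)}"

definition mu2 :: "real ^ 'd" where
  "mu2 = (\<chi> i. 1 / sqrt (real CARD('d)))"

definition KL_mu2 :: "real ^ 'd \<Rightarrow> real" where
  "KL_mu2 x = (\<Sum>i\<in>UNIV. (mu2::real^'d) $ i * ln (mu2 $ i / x $ i))"

text \<open>x minimizes KL(mu_2 || .) over CH(C); KL is +infinity at points with a zero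
  coordinate, so the minimizer has strictly positive coordinates and is compared
  with all points of CH(C) with strictly positive coordinates.\<close>
definition KL_minimizer :: "(real ^ 'd) set \<Rightarrow> real ^ 'd \<Rightarrow> bool" where
  "KL_minimizer C x \<longleftrightarrow> x \<in> convex hull C \<and> (\<forall>i. 0 < x $ i) \<and>
     (\<forall>y \<in> convex hull C. (\<forall>i. 0 < y $ i) \<longrightarrow> KL_mu2 x \<le> KL_mu2 y)"

definition UW :: "'v set \<Rightarrow> ('v \<Rightarrow> real ^ 'd) \<Rightarrow> real ^ 'd \<Rightarrow> real" where
  "UW V vv c = (\<Sum>v\<in>V. vv v \<bullet> c)"

definition is_UProj2 :: "(real ^ 'd) set \<Rightarrow> (real ^ 'd \<Rightarrow> real) \<Rightarrow> bool" where
  "is_UProj2 C p \<longleftrightarrow> (\<forall>c\<in>C. 0 \<le> p c) \<and> (\<Sum>c\<in>C. p c) = 1 \<and>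
     KL_minimizer C (\<Sum>c\<in>C. p c *\<^sub>R c)"

end

theory Submission
  imports Defs
begin

lemma KL_cmp:
  fixes x y :: "real ^ 'd"
  assumes "\<forall>i. 0 < x $ i" "\<forall>i. 0 < y $ i" "KL_mu2 x \<le> KL_mu2 y"
  shows "(\<Sum>i\<in>UNIV. ln (y $ i)) \<le> (\<Sum>i\<in>UNIV. ln (x $ i))"
proof -
  define m where "m = 1 / sqrt (real CARD('d))"
  have m: "m > 0" unfolding m_def by simp
  have mu: "\<And>i. (mu2::real^'d) $ i = m" unfolding mu2_def m_def by simp
  have "\<And>z::real^'d. (\<forall>i. 0 < z $ i) \<Longrightarrow> KL_mu2 z = m * (\<Sum>i\<in>(UNIV::'d set). ln m) - m * (\<Sum>i\<in>UNIV. ln (z $ i))"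
  proof -
    fix z :: "real^'d" assume z: "\<forall>i. 0 < z $ i"
    have "KL_mu2 z = (\<Sum>i\<in>UNIV. m * ln m - m * ln (z $ i))"
      unfolding KL_mu2_def mu using m z by (intro sum.cong) (auto simp: ln_div right_diff_distrib less_imp_neq[symmetric])
    then show "KL_mu2 z = m * (\<Sum>i\<in>(UNIV::'d set). ln m) - m * (\<Sum>i\<in>UNIV. ln (z $ i))"
      by (simp add: sum_subtractf sum_distrib_left)
  qed
  with assms have "m * (\<Sum>i\<in>UNIV. ln (x $ i)) \<ge> m * (\<Sum>i\<in>UNIV. ln (y $ i))" by simp
  with m show ?thesis by simp
qed

lemma foc:
  fixes x c :: "real ^ 'd"
  assumes "KL_minimizer C x" "c \<in> C" "\<forall>i. 0 \<le> c $ i"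
  shows "(\<Sum>i\<in>UNIV. c $ i / x $ i) \<le> real CARD('d)"
proof -
  have xh: "x \<in> convex hull C" and xp: "\<forall>i. 0 < x $ i"
    and mn: "\<forall>y \<in> convex hull C. (\<forall>i. 0 < y $ i) \<longrightarrow> KL_mu2 x \<le> KL_mu2 y"
    using assms(1) unfolding KL_minimizer_def by auto
  define r where "r i = c $ i / x $ i - 1" for i
  have r1: "r i \<ge> -1" for i using xp assms(3) unfolding r_def by (simp add: divide_nonneg_pos)
  define S where "S = (\<Sum>i\<in>UNIV. r i)"
  define Q where "Q = (\<Sum>i\<in>UNIV. (r i)^2)"
  have Q0: "Q \<ge> 0" unfolding Q_def by (simp add: sum_nonneg)
  have key: "S \<le> 2 * t * Q" if t: "0 < t" "t \<le> 1/2" for t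
  proof -
    define y where "y = (1 - t) *\<^sub>R x + t *\<^sub>R c"
    have yh: "y \<in> convex hull C" unfolding y_def
      using convexD[OF convex_convex_hull xh hull_inc[OF assms(2)], of "1-t" t] t by simp
    have yi: "y $ i = x $ i * (1 + t * r i)" for i
      using xp[rule_format, of i] unfolding y_def r_def by (simp add: field_simps)
    have pos: "1 + t * r i \<ge> 1/2" for i
    proof -
      have "t * r i \<ge> t * (-1)" using r1[of i] t by (intro mult_left_mono) auto
      then show ?thesis using t by simp
    qed
    have yp: "\<forall>i. 0 < y $ i" using yi xp pos
      by (metis mult_pos_pos dual_order.strict_trans1 half_gt_zero_iff zero_less_one)
    have "(\<Sum>i\<in>UNIV. ln (y $ i)) \<le> (\<Sum>i\<in>UNIV. ln (x $ i))"
      using KL_cmp[OF xp yp] mn yh yp by blast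
    moreover have "ln (y $ i) = ln (x $ i) + ln (1 + t * r i)" for i
      using yi[of i] xp[rule_format, of i] pos[of i] by (simp add: ln_mult)
    ultimately have L: "(\<Sum>i\<in>UNIV. ln (1 + t * r i)) \<le> 0"
      by (simp add: sum.distrib)
    have lb: "ln (1 + t * r i) \<ge> t * r i - 2 * t^2 * (r i)^2" for i
    proof -
      have p: "1 + t * r i > 0" using pos[of i] by linarith
      have "ln (1 / (1 + t * r i)) \<le> 1 / (1 + t * r i) - 1" using p by (intro ln_le_minus_one) simp
      hence a: "ln (1 + t * r i) \<ge> 1 - 1 / (1 + t * r i)" using p by (simp add: ln_div)
      have "1 - 1 / (1 + t * r i) = t * r i - (t * r i)^2 / (1 + t * r i)"
        using p by (simp add: field_simps power2_eq_square)
      moreover have "(t * r i)^2 / (1 + t * r i) \<le> 2 * (t * r i)^2"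
      proof -
        have "(t * r i)^2 * 1 \<le> (t * r i)^2 * (2 * (1 + t * r i))"
          using pos[of i] by (intro mult_left_mono) auto
        then have "(t * r i)^2 \<le> 2 * (t * r i)^2 * (1 + t * r i)" by (simp add: algebra_simps)
        then show ?thesis using p by (simp add: divide_le_eq)
      qed
      ultimately show ?thesis using a by (simp add: power_mult_distrib)
    qed
    have "(\<Sum>i\<in>UNIV. t * r i - 2 * t^2 * (r i)^2) \<le> 0"
      using L lb by (meson order_trans sum_mono)
    hence "t * S - 2 * t^2 * Q \<le> 0"
      unfolding S_def Q_def by (simp add: sum_subtractf sum_distrib_left)
    hence "t * S \<le> t * (2 * t * Q)" by (simp add: power2_eq_square algebra_simps)
    thus ?thesis using t by simp
  qed
  have S0: "S \<le> 0"
  proof (rule ccontr)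
    assume "\<not> S \<le> 0"
    hence Sp: "S > 0" by simp
    define t where "t = min (1/2) (S / (4 * Q + 4))"
    have q4: "4 * Q + 4 > 0" using Q0 by simp
    have t1: "t \<le> 1/2" unfolding t_def by (rule min.cobounded1)
    have t2: "t \<le> S / (4 * Q + 4)" unfolding t_def by (rule min.cobounded2)
    have t0: "0 < t" unfolding t_def using Sp q4 by simp
    have tp: "0 < t" "t \<le> 1/2" using t0 t1 by auto
    have "t * (4 * Q + 4) \<le> S" using t2 q4 by (simp add: le_divide_eq)
    moreover have "2 * t * Q < t * (4 * Q + 4)" proof - have "Q * t \<ge> 0" using t0 Q0 by simp then show ?thesis using t0 by (simp add: algebra_simps) qed
    ultimately have "2 * t * Q < S" by linarith
    with key[OF tp] show False by simp
  qed
  have "(\<Sum>i\<in>UNIV. c $ i / x $ i) = S + real CARD('d)"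
    unfolding S_def r_def by (simp add: sum_subtractf)
  with S0 show ?thesis by simp
qed


lemma cdot:
  fixes x c :: "real ^ 'd"
  assumes "unit_nonneg c" "\<forall>i. 0 < x $ i" "(\<Sum>i\<in>UNIV. c $ i / x $ i) \<le> real CARD('d)"
  shows "c \<bullet> x \<ge> 1 / real CARD('d)"
proof -
  have cn: "\<And>i. 0 \<le> c $ i" and nc: "norm c = 1" using assms(1) unfolding unit_nonneg_def by auto
  have c1: "c $ i \<le> 1" for i using component_le_norm_cart[of c i] nc by simp
  have xp: "0 < x $ i" for i using assms(2) by simp
  have cc: "(\<Sum>i\<in>UNIV. (c $ i)^2) = 1" using nc unfolding norm_eq_1 inner_vec_def
    by (simp add: power2_eq_square)
  define a where "a i = c $ i / sqrt (x $ i)" for i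
  define b where "b i = c $ i * sqrt (x $ i)" for i
  have ab: "a i * b i = (c $ i)^2" for i using xp[of i] unfolding a_def b_def
    by (simp add: power2_eq_square)
  have a2: "(a i)^2 \<le> c $ i / x $ i" for i
  proof -
    have "(a i)^2 = (c $ i)^2 / x $ i" using xp[of i] unfolding a_def by (simp add: power_divide)
    also have "\<dots> \<le> c $ i / x $ i" using xp[of i] cn[of i] c1[of i]
      by (intro divide_right_mono) (auto simp: power2_eq_square mult_left_le)
    finally show ?thesis .
  qed
  have b2: "(b i)^2 \<le> c $ i * x $ i" for i
  proof -
    have "(b i)^2 = (c $ i)^2 * x $ i" using xp[of i] unfolding b_def by (simp add: power_mult_distrib)
    also have "\<dots> \<le> c $ i * x $ i" using xp[of i] cn[of i] c1[of i]
      by (intro mult_right_mono) (auto simp: power2_eq_square mult_left_le)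
    finally show ?thesis .
  qed
  have "1 = (\<Sum>i\<in>UNIV. a i * b i)^2" using cc ab by simp
  also have "\<dots> \<le> (\<Sum>i\<in>UNIV. (a i)^2) * (\<Sum>i\<in>UNIV. (b i)^2)" by (rule Cauchy_Schwarz_ineq_sum)
  also have "\<dots> \<le> real CARD('d) * (c \<bullet> x)"
  proof (rule mult_mono)
    show "(\<Sum>i\<in>UNIV. (a i)^2) \<le> real CARD('d)" using a2 assms(3) by (meson order_trans sum_mono)
    show "(\<Sum>i\<in>UNIV. (b i)^2) \<le> c \<bullet> x" unfolding inner_vec_def using b2 by (simp add: sum_mono)
    show "0 \<le> real CARD('d)" by simp
    show "0 \<le> (\<Sum>i\<in>UNIV. (b i)^2)" by (simp add: sum_nonneg)
  qed
  finally show ?thesis by (simp add: divide_le_eq mult.commute)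
qed

lemma voter:
  fixes x v :: "real ^ 'd"
  assumes "finite C" "unit_nonneg v" "v \<in> lin_cone C" "\<forall>c\<in>C. c \<bullet> x \<ge> 1 / real CARD('d)"
    "\<forall>c\<in>C. unit_nonneg c"
  shows "v \<bullet> x \<ge> 1 / real CARD('d)"
proof -
  obtain a where a0: "\<forall>c\<in>C. 0 \<le> a c" and va: "v = (\<Sum>c\<in>C. a c *\<^sub>R c)"
    using assms(3) unfolding lin_cone_def by auto
  have "1 = norm v" using assms(2) unfolding unit_nonneg_def by simp
  also have "\<dots> \<le> (\<Sum>c\<in>C. norm (a c *\<^sub>R c))" unfolding va by (rule norm_sum)
  also have "\<dots> = (\<Sum>c\<in>C. a c)" using a0 assms(5) unfolding unit_nonneg_def
    by (intro sum.cong) auto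
  finally have s1: "1 \<le> (\<Sum>c\<in>C. a c)" .
  have "v \<bullet> x = (\<Sum>c\<in>C. a c * (c \<bullet> x))" unfolding va by (simp add: inner_sum_left)
  also have "\<dots> \<ge> (\<Sum>c\<in>C. a c * (1 / real CARD('d)))"
    using a0 assms(4) by (intro sum_mono mult_left_mono) auto
  finally have "v \<bullet> x \<ge> (\<Sum>c\<in>C. a c) / real CARD('d)" by (simp add: sum_divide_distrib)
  moreover have "(\<Sum>c\<in>C. a c) / real CARD('d) \<ge> 1 / real CARD('d)"
    using s1 by (intro divide_right_mono) auto
  ultimately show ?thesis by linarith
qed

theorem theorem16:
  fixes C :: "(real ^ 'd) set" and V :: "'v set" and vv :: "'v \<Rightarrow> real ^ 'd"
    and p :: "real ^ 'd \<Rightarrow> real"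
  assumes "finite C" and "C \<noteq> {}" and "\<forall>c\<in>C. unit_nonneg c"
    and "finite V" and "\<forall>v\<in>V. unit_nonneg (vv v) \<and> vv v \<in> lin_cone C"
    and "is_UProj2 C p"
  shows "(\<Sum>c\<in>C. p c * UW V vv c) \<ge> real (card V) / real CARD('d)
    \<and> (\<forall>c\<in>C. UW V vv c / (\<Sum>c'\<in>C. p c' * UW V vv c') \<le> real CARD('d))"
proof -
  define x where "x = (\<Sum>c\<in>C. p c *\<^sub>R c)"
  have km: "KL_minimizer C x" using assms(6) unfolding is_UProj2_def x_def by auto
  have xp: "\<forall>i. 0 < x $ i" using km unfolding KL_minimizer_def by auto
  have cx: "\<forall>c\<in>C. c \<bullet> x \<ge> 1 / real CARD('d)"
  proof
    fix c assume c: "c \<in> C"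
    have u: "unit_nonneg c" using assms(3) c by auto
    hence "\<forall>i. 0 \<le> c $ i" unfolding unit_nonneg_def by auto
    from foc[OF km c this] show "c \<bullet> x \<ge> 1 / real CARD('d)" by (rule cdot[OF u xp])
  qed
  have vx: "\<forall>v\<in>V. vv v \<bullet> x \<ge> 1 / real CARD('d)"
    using voter[OF assms(1) _ _ cx assms(3)] assms(5) by auto
  have E: "(\<Sum>c\<in>C. p c * UW V vv c) = (\<Sum>v\<in>V. vv v \<bullet> x)"
    unfolding UW_def x_def
    by (simp add: inner_sum_right sum_distrib_left sum.swap[of _ C V] mult.commute)
  have "(\<Sum>v\<in>V. vv v \<bullet> x) \<ge> (\<Sum>v\<in>V. 1 / real CARD('d))"
    using vx by (intro sum_mono) auto
  hence P1: "(\<Sum>c\<in>C. p c * UW V vv c) \<ge> real (card V) / real CARD('d)" using E by simp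
  have P2: "UW V vv c / (\<Sum>c'\<in>C. p c' * UW V vv c') \<le> real CARD('d)" if c: "c \<in> C" for c
  proof -
    have "UW V vv c \<le> (\<Sum>v\<in>V. 1)" unfolding UW_def
    proof (rule sum_mono)
      fix v assume "v \<in> V"
      hence "norm (vv v) = 1" "norm c = 1" using assms(5) assms(3) c unfolding unit_nonneg_def by auto
      thus "vv v \<bullet> c \<le> 1" using norm_cauchy_schwarz[of "vv v" c] by simp
    qed
    hence U: "UW V vv c \<le> real (card V)" by simp
    show ?thesis
    proof (cases "V = {}")
      case True thus ?thesis by (simp add: UW_def)
    next
      case False
      hence n: "real (card V) > 0" using assms(4) by (simp add: card_gt_0_iff)
      have Ep: "(\<Sum>c'\<in>C. p c' * UW V vv c') > 0"
        using P1 n by (smt (verit) divide_pos_pos of_nat_0_less_iff zero_less_card_finite)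
      have "real (card V) \<le> real CARD('d) * (\<Sum>c'\<in>C. p c' * UW V vv c')"
        using P1 by (simp add: divide_le_eq mult.commute)
      with U Ep show ?thesis by (simp add: divide_le_eq)
    qed
  qed
  show ?thesis using P1 P2 by blast
qed

end
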